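(* Let $v\ge2$, $\epsilon>0$ and $k\in\{1,\dots,v-1\}$. Then $k\in K_{opt}(v,\epsilon)$ if and only if $$E(k,k+1;v)\le e^\epsilon\le E(k-1,k;v).$$ Moreover, if $e^\epsilon=E(k,k+1;v)$ for some $k$, then $K_{opt}(v,\epsilon)=\{k,k+1\}$; otherwise $K_{opt}(v,\epsilon)$ is a singleton.
   Context: $K_{opt}(v,\epsilon)$ is the set of integers $k\in\{1,\dots,v-1\}$ minimizing $\frac{(ke^\epsilon+v-k)^2}{k(v-k)}$. For integers $0\le k_1<k_2\le v$ with $(k_1,k_2)\ne(0,v)$, $E(k_1,k_2;v)=\sqrt{\frac{(v-k_1)(v-k_2)}{k_1k_2}}$ when $k_1\ge1$, and $E(0,k_2;v):=\infty$. *)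

theory Defs
  imports Complex_Main "HOL-Library.Extended_Real"
begin

definition kopt_obj :: "nat \<Rightarrow> real \<Rightarrow> nat \<Rightarrow> real" where
  "kopt_obj v \<epsilon> k = (real k * exp \<epsilon> + real v - real k)^2 / (real k * (real v - real k))"

definition K_opt :: "nat \<Rightarrow> real \<Rightarrow> nat set" where
  "K_opt v \<epsilon> = {k \<in> {1..v-1}. \<forall>j \<in> {1..v-1}. kopt_obj v \<epsilon> k \<le> kopt_obj v \<epsilon> j}"

definition E :: "nat \<Rightarrow> nat \<Rightarrow> nat \<Rightarrow> ereal" where
  "E k1 k2 v = (if k1 = 0 then \<infinity>
     else ereal (sqrt ((real v - real k1) * (real v - real k2) / (real k1 * real k2))))"

end

theory Submission
  imports Defs
begin

definition DD :: "nat \<Rightarrow> real \<Rightarrow> nat \<Rightarrow> real" where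
  "DD v \<epsilon> k = (exp \<epsilon>)^2 * real k * (real k + 1) - (real v - real k) * (real v - real k - 1)"

lemma obj_alt:
  assumes "1 \<le> k" "k < v"
  shows "kopt_obj v \<epsilon> k = (exp \<epsilon>)^2 * real k / (real v - real k) + (real v - real k) / real k + 2 * exp \<epsilon>"
proof -
  have "real k > 0" "real v - real k > 0" using assms by auto
  then show ?thesis unfolding kopt_obj_def by (simp add: field_simps power2_eq_square)
qed

lemma obj_diff:
  assumes "1 \<le> k" "k + 1 < v"
  shows "kopt_obj v \<epsilon> (k+1) - kopt_obj v \<epsilon> k
     = real v * DD v \<epsilon> k / (real k * (real k + 1) * (real v - real k) * (real v - real k - 1))"
proof -
  have p: "real k > 0" "real v - real k > 0" "real v - real k - 1 > 0" using assms by auto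
  have e1: "kopt_obj v \<epsilon> k = (exp \<epsilon>)^2 * real k / (real v - real k) + (real v - real k) / real k + 2 * exp \<epsilon>"
    using obj_alt assms by simp
  have e2: "kopt_obj v \<epsilon> (k+1) = (exp \<epsilon>)^2 * (real k + 1) / (real v - real k - 1) + (real v - real k - 1) / (real k + 1) + 2 * exp \<epsilon>"
    using obj_alt[of "k+1" v \<epsilon>] assms by (simp add: algebra_simps)
  have g: "b*(p+1)/r + r/(p+1) + c - (b*p/(r+1) + (r+1)/p + c) = (p+(r+1))*(b*p*(p+1) - (r+1)*r)/(p*(p+1)*(r+1)*r)"
    if "p > 0" "r > 0" for p r b c :: real
  proof -
    have "p \<noteq> 0" "r \<noteq> 0" "p + 1 \<noteq> 0" "r + 1 \<noteq> 0" "1 + p \<noteq> 0" "1 + r \<noteq> 0" using that by auto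
    then show ?thesis by (simp add: divide_simps) (simp add: algebra_simps)
  qed
  have q: "real v - real k = (real v - real k - 1) + 1" by simp
  have DD': "DD v \<epsilon> k = (exp \<epsilon>)^2 * real k * (real k + 1) - ((real v - real k - 1) + 1) * (real v - real k - 1)"
    unfolding DD_def by simp
  have vv: "real v = real k + ((real v - real k - 1) + 1)" by simp
  show ?thesis
    unfolding e1 e2 DD' apply (subst (1 2 3) q) apply (subst (1) vv)
    using g[OF p(1) p(3), of "(exp \<epsilon>)^2" "2 * exp \<epsilon>"]
    by (simp add: mult.assoc)
qed

lemma sign_aux:
  assumes "d > 0" "(w::real) > 0"
  shows "0 \<le> w * x / d \<longleftrightarrow> 0 \<le> x" "w * x / d \<le> 0 \<longleftrightarrow> x \<le> 0"
  using assms by (auto simp: zero_le_divide_iff divide_le_0_iff zero_le_mult_iff mult_le_0_iff)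

lemma obj_le_iff:
  assumes "1 \<le> k" "k + 1 < v"
  shows "kopt_obj v \<epsilon> k \<le> kopt_obj v \<epsilon> (k+1) \<longleftrightarrow> 0 \<le> DD v \<epsilon> k"
    and "kopt_obj v \<epsilon> (k+1) \<le> kopt_obj v \<epsilon> k \<longleftrightarrow> DD v \<epsilon> k \<le> 0"
proof -
  have p: "real k * (real k + 1) * (real v - real k) * (real v - real k - 1) > 0"
    "real v > 0" using assms by auto
  have "kopt_obj v \<epsilon> k \<le> kopt_obj v \<epsilon> (k+1) \<longleftrightarrow> 0 \<le> kopt_obj v \<epsilon> (k+1) - kopt_obj v \<epsilon> k" by simp
  also have "\<dots> \<longleftrightarrow> 0 \<le> DD v \<epsilon> k"
    unfolding obj_diff[OF assms] using sign_aux(1)[OF p] .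
  finally show "kopt_obj v \<epsilon> k \<le> kopt_obj v \<epsilon> (k+1) \<longleftrightarrow> 0 \<le> DD v \<epsilon> k" .
  have "kopt_obj v \<epsilon> (k+1) \<le> kopt_obj v \<epsilon> k \<longleftrightarrow> kopt_obj v \<epsilon> (k+1) - kopt_obj v \<epsilon> k \<le> 0" by simp
  also have "\<dots> \<longleftrightarrow> DD v \<epsilon> k \<le> 0"
    unfolding obj_diff[OF assms] using sign_aux(2)[OF p] .
  finally show "kopt_obj v \<epsilon> (k+1) \<le> kopt_obj v \<epsilon> k \<longleftrightarrow> DD v \<epsilon> k \<le> 0" .
qed

lemma DD_mono:
  assumes "i < j" "j \<le> v"
  shows "DD v \<epsilon> i < DD v \<epsilon> j"
proof -
  have e: "DD v \<epsilon> j - DD v \<epsilon> i = (real j - real i) * ((exp \<epsilon>)^2 * (real i + real j + 1) + (2 * real v - real i - real j - 1))"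
    unfolding DD_def by (simp add: algebra_simps power2_eq_square)
  have "real j - real i > 0" using assms by auto
  moreover have "(exp \<epsilon>)^2 * (real i + real j + 1) > 0" by simp
  moreover have "2 * real v - real i - real j - 1 \<ge> 0" using assms by auto
  ultimately have "DD v \<epsilon> j - DD v \<epsilon> i > 0" unfolding e
    by (metis add_pos_nonneg mult_pos_pos)
  then show ?thesis by simp
qed

lemma DD_mono_le:
  assumes "i \<le> j" "j \<le> v"
  shows "DD v \<epsilon> i \<le> DD v \<epsilon> j"
  using DD_mono[of i j v \<epsilon>] assms by (cases "i = j") auto

lemma chain_up:
  assumes "\<And>i. k \<le> i \<Longrightarrow> i < j \<Longrightarrow> (f::nat \<Rightarrow> real) i \<le> f (i+1)" "k \<le> j"
  shows "f k \<le> f j"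
  using assms
proof (induction j)
  case 0 then show ?case by simp
next
  case (Suc j)
  show ?case
  proof (cases "k = Suc j")
    case False
    then have "f k \<le> f j" using Suc by auto
    also have "f j \<le> f (Suc j)" using Suc.prems False by auto
    finally show ?thesis .
  qed simp
qed

lemma chain_down:
  assumes "\<And>i. j \<le> i \<Longrightarrow> i < k \<Longrightarrow> (f::nat \<Rightarrow> real) (i+1) \<le> f i" "j \<le> k"
  shows "f k \<le> f j"
  using chain_up[of j k "\<lambda>i. - f i"] assms by auto

lemma char:
  assumes "1 \<le> k" "k < v"
  shows "k \<in> K_opt v \<epsilon> \<longleftrightarrow> ((k+1 < v \<longrightarrow> 0 \<le> DD v \<epsilon> k) \<and> (2 \<le> k \<longrightarrow> DD v \<epsilon> (k-1) \<le> 0))"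
proof
  assume k: "k \<in> K_opt v \<epsilon>"
  have m: "\<And>j. 1 \<le> j \<Longrightarrow> j < v \<Longrightarrow> kopt_obj v \<epsilon> k \<le> kopt_obj v \<epsilon> j"
    using k unfolding K_opt_def by auto
  show "(k+1 < v \<longrightarrow> 0 \<le> DD v \<epsilon> k) \<and> (2 \<le> k \<longrightarrow> DD v \<epsilon> (k-1) \<le> 0)"
  proof (intro conjI impI)
    assume "k+1 < v"
    then show "0 \<le> DD v \<epsilon> k" using obj_le_iff(1)[OF assms(1)] m[of "k+1"] by auto
  next
    assume "2 \<le> k"
    then have "kopt_obj v \<epsilon> (k-1+1) \<le> kopt_obj v \<epsilon> (k-1)" using m[of "k-1"] assms by auto
    then show "DD v \<epsilon> (k-1) \<le> 0" using obj_le_iff(2)[of "k-1" v \<epsilon>] \<open>2 \<le> k\<close> assms by auto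
  qed
next
  assume c: "(k+1 < v \<longrightarrow> 0 \<le> DD v \<epsilon> k) \<and> (2 \<le> k \<longrightarrow> DD v \<epsilon> (k-1) \<le> 0)"
  have "kopt_obj v \<epsilon> k \<le> kopt_obj v \<epsilon> j" if j: "1 \<le> j" "j < v" for j
  proof (cases "k \<le> j")
    case True
    show ?thesis
    proof (rule chain_up[OF _ True])
      fix i assume i: "k \<le> i" "i < j"
      have "0 \<le> DD v \<epsilon> k" using c i j by auto
      also have "\<dots> \<le> DD v \<epsilon> i" using DD_mono_le[of k i v \<epsilon>] i j by auto
      finally show "kopt_obj v \<epsilon> i \<le> kopt_obj v \<epsilon> (i + 1)"
        using obj_le_iff(1)[of i v \<epsilon>] i j assms by auto
    qed
  next
    case False
    show ?thesis
    proof (rule chain_down)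
      fix i assume i: "j \<le> i" "i < k"
      have "DD v \<epsilon> i \<le> DD v \<epsilon> (k-1)" using DD_mono_le[of i "k-1" v \<epsilon>] i assms by auto
      also have "\<dots> \<le> 0" using c i j by auto
      finally show "kopt_obj v \<epsilon> (i+1) \<le> kopt_obj v \<epsilon> i"
        using obj_le_iff(2)[of i v \<epsilon>] i j assms by auto
    qed (use False in auto)
  qed
  then show "k \<in> K_opt v \<epsilon>" unfolding K_opt_def using assms by auto
qed

lemma E_conv:
  assumes "1 \<le> j" "j < v"
  shows "E j (j+1) v \<le> ereal (exp \<epsilon>) \<longleftrightarrow> 0 \<le> DD v \<epsilon> j"
    and "ereal (exp \<epsilon>) \<le> E j (j+1) v \<longleftrightarrow> DD v \<epsilon> j \<le> 0"
    and "ereal (exp \<epsilon>) = E j (j+1) v \<longleftrightarrow> DD v \<epsilon> j = 0"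
proof -
  define r where "r = (real v - real j) * (real v - real (j+1)) / (real j * real (j+1))"
  define a where "a = exp \<epsilon>"
  have Ej: "E j (j+1) v = ereal (sqrt r)" unfolding E_def r_def using assms by auto
  have a: "a = sqrt (a^2)" unfolding a_def by simp
  have pos: "real j * real (j+1) > 0" using assms by auto
  have D: "DD v \<epsilon> j = a^2 * (real j * real (j+1)) - (real v - real j) * (real v - real (j+1))"
    unfolding DD_def a_def by (simp add: algebra_simps)
  have "sqrt r \<le> a \<longleftrightarrow> r \<le> a^2" by (subst a, subst real_sqrt_le_iff) simp
  also have "\<dots> \<longleftrightarrow> 0 \<le> DD v \<epsilon> j" unfolding r_def D using pos by (simp add: pos_divide_le_eq)
  finally show "E j (j+1) v \<le> ereal (exp \<epsilon>) \<longleftrightarrow> 0 \<le> DD v \<epsilon> j" unfolding Ej a_def by simp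
  have "a \<le> sqrt r \<longleftrightarrow> a^2 \<le> r" by (subst a, subst real_sqrt_le_iff) simp
  also have "\<dots> \<longleftrightarrow> DD v \<epsilon> j \<le> 0" unfolding r_def D using pos by (simp add: pos_le_divide_eq)
  finally show "ereal (exp \<epsilon>) \<le> E j (j+1) v \<longleftrightarrow> DD v \<epsilon> j \<le> 0" unfolding Ej a_def by simp
  have "a = sqrt r \<longleftrightarrow> a^2 = r" by (subst a, subst real_sqrt_eq_iff) simp
  also have "\<dots> \<longleftrightarrow> DD v \<epsilon> j = 0" unfolding r_def D using pos by (auto simp: field_simps)
  finally show "ereal (exp \<epsilon>) = E j (j+1) v \<longleftrightarrow> DD v \<epsilon> j = 0" unfolding Ej a_def by simp
qed

lemma DD_last:
  assumes "k + 1 = v" "1 \<le> k"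
  shows "0 < DD v \<epsilon> k"
proof -
  have h: "real v - real k - 1 = 0" using assms by auto
  have "DD v \<epsilon> k = (exp \<epsilon>)^2 * real k * (real k + 1)" unfolding DD_def h by simp
  then show ?thesis using assms by simp
qed

lemma char2:
  assumes "1 \<le> k" "k < v"
  shows "k \<in> K_opt v \<epsilon> \<longleftrightarrow> (E k (k+1) v \<le> ereal (exp \<epsilon>) \<and> ereal (exp \<epsilon>) \<le> E (k-1) k v)"
proof -
  have A: "E k (k+1) v \<le> ereal (exp \<epsilon>) \<longleftrightarrow> (k+1 < v \<longrightarrow> 0 \<le> DD v \<epsilon> k)"
    using E_conv(1)[OF assms] DD_last[of k v \<epsilon>] assms by force
  have B: "ereal (exp \<epsilon>) \<le> E (k-1) k v \<longleftrightarrow> (2 \<le> k \<longrightarrow> DD v \<epsilon> (k-1) \<le> 0)"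
  proof (cases "k = 1")
    case True then show ?thesis by (simp add: E_def)
  next
    case False
    then show ?thesis using E_conv(2)[of "k-1" v \<epsilon>] assms by auto
  qed
  show ?thesis unfolding char[OF assms] A B ..
qed

theorem proposition2:
  fixes v :: nat and \<epsilon> :: real
  assumes "v \<ge> 2" and "\<epsilon> > 0"
  shows "(\<forall>k \<in> {1..v-1}. k \<in> K_opt v \<epsilon> \<longleftrightarrow>
            (E k (k+1) v \<le> ereal (exp \<epsilon>) \<and> ereal (exp \<epsilon>) \<le> E (k-1) k v))
       \<and> (\<forall>k \<in> {1..v-1}. ereal (exp \<epsilon>) = E k (k+1) v \<longrightarrow> K_opt v \<epsilon> = {k, k+1})
       \<and> (\<not> (\<exists>k \<in> {1..v-1}. ereal (exp \<epsilon>) = E k (k+1) v) \<longrightarrow> (\<exists>k. K_opt v \<epsilon> = {k}))"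
proof (intro conjI)
  show "\<forall>k \<in> {1..v-1}. k \<in> K_opt v \<epsilon> \<longleftrightarrow>
            (E k (k+1) v \<le> ereal (exp \<epsilon>) \<and> ereal (exp \<epsilon>) \<le> E (k-1) k v)"
    using char2 assms by auto
next
  show "\<forall>k \<in> {1..v-1}. ereal (exp \<epsilon>) = E k (k+1) v \<longrightarrow> K_opt v \<epsilon> = {k, k+1}"
  proof (intro ballI impI)
    fix k assume k: "k \<in> {1..v-1}" and eq: "ereal (exp \<epsilon>) = E k (k+1) v"
    have k1: "1 \<le> k" "k < v" using k assms by auto
    have D0: "DD v \<epsilon> k = 0" using E_conv(3)[OF k1] eq by simp
    have kv: "k + 1 < v" using DD_last[of k v \<epsilon>] D0 k1 by force
    show "K_opt v \<epsilon> = {k, k+1}"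
    proof (intro set_eqI iffI)
      fix j assume j: "j \<in> K_opt v \<epsilon>"
      then have j1: "1 \<le> j" "j < v" unfolding K_opt_def using assms by auto
      have c: "(j+1 < v \<longrightarrow> 0 \<le> DD v \<epsilon> j) \<and> (2 \<le> j \<longrightarrow> DD v \<epsilon> (j-1) \<le> 0)"
        using char[OF j1] j by simp
      show "j \<in> {k, k+1}"
      proof (rule ccontr)
        assume "j \<notin> {k, k+1}"
        then consider "j < k" | "k + 1 < j" by force
        then show False
        proof cases
          case 1
          then show ?thesis using DD_mono[of j k v \<epsilon>] c D0 k1 by auto
        next
          case 2
          then have "k < j-1" "j-1 \<le> v" "2 \<le> j" using j1 by auto
          then show ?thesis using DD_mono[of k "j-1" v \<epsilon>] c D0 by auto
        qed
      qed
    next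
      fix j assume "j \<in> {k, k+1}"
      then consider "j = k" | "j = k+1" by auto
      then show "j \<in> K_opt v \<epsilon>"
      proof cases
        case 1
        have "2 \<le> k \<Longrightarrow> DD v \<epsilon> (k-1) \<le> 0" using DD_mono[of "k-1" k v \<epsilon>] D0 k1 by auto
        then show ?thesis unfolding 1 char[OF k1] using D0 by auto
      next
        case 2
        have j1: "1 \<le> k+1" "k+1 < v" using kv by auto
        have "k+2 < v \<Longrightarrow> 0 \<le> DD v \<epsilon> (k+1)" using DD_mono[of k "k+1" v \<epsilon>] D0 kv by auto
        then show ?thesis unfolding 2 char[OF j1] using D0 by auto
      qed
    qed
  qed
next
  show "\<not> (\<exists>k \<in> {1..v-1}. ereal (exp \<epsilon>) = E k (k+1) v) \<longrightarrow> (\<exists>k. K_opt v \<epsilon> = {k})"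
  proof
    assume ne: "\<not> (\<exists>k \<in> {1..v-1}. ereal (exp \<epsilon>) = E k (k+1) v)"
    have nz: "DD v \<epsilon> k \<noteq> 0" if "1 \<le> k" "k < v" for k
    proof
      assume "DD v \<epsilon> k = 0"
      then have "ereal (exp \<epsilon>) = E k (k+1) v" using E_conv(3)[OF that, of \<epsilon>] by simp
      moreover have "k \<in> {1..v-1}" using that by auto
      ultimately show False using ne by blast
    qed
    let ?S = "kopt_obj v \<epsilon> ` {1..v-1}"
    have fin: "finite ?S" "?S \<noteq> {}" using assms by auto
    obtain k where k: "k \<in> {1..v-1}" "kopt_obj v \<epsilon> k = Min ?S"
      using Min_in[OF fin] by auto
    have kin: "k \<in> K_opt v \<epsilon>" unfolding K_opt_def using k fin by auto
    have "K_opt v \<epsilon> = {k}"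
    proof (intro set_eqI iffI)
      fix j assume j: "j \<in> K_opt v \<epsilon>"
      show "j \<in> {k}"
      proof (rule ccontr)
        assume "j \<notin> {k}"
        then have "j \<noteq> k" by simp
        have gen: False if a: "a \<in> K_opt v \<epsilon>" "b \<in> K_opt v \<epsilon>" "a < b" for a b
        proof -
          have a1: "1 \<le> a" "a < v" "1 \<le> b" "b < v" using a unfolding K_opt_def using assms by auto
          have "a + 1 < v" "2 \<le> b" using a1 a(3) by auto
          then have ca: "0 \<le> DD v \<epsilon> a" using char[OF a1(1,2), of \<epsilon>] a(1) by auto
          have cb: "DD v \<epsilon> (b-1) \<le> 0" using char[OF a1(3,4), of \<epsilon>] a(2) \<open>2 \<le> b\<close> by auto
          show False
          proof (cases "a = b - 1")
            case True then show ?thesis using ca cb nz[OF a1(1,2)] by auto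
          next
            case False
            then have "a < b - 1" "b - 1 \<le> v" using a1 a(3) by auto
            then show ?thesis using DD_mono[of a "b-1" v \<epsilon>] ca cb by auto
          qed
        qed
        show False using gen[OF j kin] gen[OF kin j] \<open>j \<noteq> k\<close> by (cases "j < k") auto
      qed
    qed (use kin in auto)
    then show "\<exists>k. K_opt v \<epsilon> = {k}" by blast
  qed
qed

end
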